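(* Let $1\le M\le N$ be integers and let $i_1,\dots,i_N$, $j_1,\dots,j_N$, $k_1,\dots,k_M$, $l_1,\dots,l_M$ be mode indices. Then \begin{align*} &\langle\varphi_{i_1}\dots\varphi_{i_N}|\,a^\dagger_{k_1}\cdots a^\dagger_{k_M}a_{l_1}\cdots a_{l_M}\,|\varphi_{j_1}\dots\varphi_{j_N}\rangle\\ &=\frac{(N-M)!}{N!}(M!)^2\sum_{\substack{1\le\alpha_1<\dots<\alpha_M\le N\\ 1\le\beta_1<\dots<\beta_M\le N}}\delta_{k_1\dots k_M;\,i_{\alpha_1}\dots i_{\alpha_M}}\,\delta_{l_1\dots l_M;\,j_{\beta_1}\dots j_{\beta_M}}\,\delta_{\{i_1\dots i_N\}\setminus\{i_{\alpha_1}\dots i_{\alpha_M}\};\,\{j_1\dots j_N\}\setminus\{j_{\beta_1}\dots j_{\beta_M}\}} . \end{align*}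
   Context: Let $\{|\varphi_i\rangle\}$ be an orthonormal basis of a single-particle Hilbert space, and let $a_i,a_i^\dagger$ be the corresponding bosonic annihilation and creation operators on Fock space, satisfying $[a_i,a_j^\dagger]=\delta_{ij}$, $[a_i^\dagger,a_j^\dagger]=0$, $[a_i,a_j]=0$; $|0\rangle$ is the vacuum. Symmetrized $N$-particle states are $|\varphi_{i_1}\dots\varphi_{i_N}\rangle=\frac{1}{\sqrt{N!}}a_{i_1}^\dagger\cdots a_{i_N}^\dagger|0\rangle$. The permutation-invariant Kronecker delta of two index lists of equal length $L$ is $\delta_{i_1\dots i_L;j_1\dots j_L}:=\frac{1}{L!}\sum_{\sigma\in S_L}\prod_{k=1}^L\delta_{i_k j_{\sigma(k)}}$ (equal to $1$ for $L=0$). The list $\{i_1\dots i_N\}\setminus\{i_{\alpha_1}\dots i_{\alpha_M}\}$ is obtained from $i_1,\dots,i_N$ by removing the entries at positions $\alpha_1,\dots,\alpha_M$, and similarly for the $j$'s. *)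

theory Defs
  imports Complex_Main "HOL-Library.Multiset" "HOL-Combinatorics.Permutations"
begin

text \<open>Bosonic Fock space in the occupation-number representation: a vector is a
  complex-valued function on occupation configurations (multisets of mode labels);
  the basis vector of configuration n is the indicator of n.\<close>

type_synonym 'a fock = "'a multiset \<Rightarrow> complex"

definition fock_vacuum :: "'a fock" where
  "fock_vacuum = (\<lambda>m. if m = {#} then 1 else 0)"

text \<open>Creation operator: maps basis vector n to sqrt(n_i + 1) times basis vector n + i.\<close>
definition create :: "'a \<Rightarrow> 'a fock \<Rightarrow> 'a fock" where
  "create i v = (\<lambda>m. if i \<in># m then complex_of_real (sqrt (real (count m i))) * v (m - {#i#}) else 0)"

text \<open>Annihilation operator: maps basis vector n to sqrt(n_i) times basis vector n - i.\<close>
definition annih :: "'a \<Rightarrow> 'a fock \<Rightarrow> 'a fock" where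
  "annih i v = (\<lambda>m. complex_of_real (sqrt (real (count m i + 1))) * v (m + {#i#}))"

text \<open>Inner product (antilinear in the first argument); meaningful when u has finite support.\<close>
definition fock_inner :: "'a fock \<Rightarrow> 'a fock \<Rightarrow> complex" where
  "fock_inner u v = (\<Sum>m\<in>{m. u m \<noteq> 0}. cnj (u m) * v m)"

definition sym_state :: "'a list \<Rightarrow> 'a fock" where
  "sym_state xs = (\<lambda>m. complex_of_real (1 / sqrt (fact (length xs))) * foldr create xs fock_vacuum m)"

definition pdelta :: "'a list \<Rightarrow> 'a list \<Rightarrow> complex" where
  "pdelta xs ys = complex_of_real (1 / fact (length xs) *
     (\<Sum>\<sigma>\<in>{\<sigma>. \<sigma> permutes {..<length xs}}.
        \<Prod>k<length xs. (if xs ! k = ys ! (\<sigma> k) then 1 else 0)))"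

end

theory Submission
  imports Defs
begin

definition w :: "'a multiset \<Rightarrow> nat" where
  "w X = (\<Prod>i\<in>set_mset X. fact (count X i))"

lemma w_empty[simp]: "w {#} = 1" by (simp add: w_def)

lemma w_pos: "w X > 0" by (simp add: w_def)

lemma w_add: "w (add_mset x X) = Suc (count X x) * w X"
proof (cases "x \<in># X")
  case True
  have "w (add_mset x X) = fact (Suc (count X x)) * (\<Prod>i\<in>set_mset X - {x}. fact (count (add_mset x X) i))"
    unfolding w_def using True by (simp add: prod.remove insert_absorb)
  also have "(\<Prod>i\<in>set_mset X - {x}. fact (count (add_mset x X) i)) = (\<Prod>i\<in>set_mset X - {x}. fact (count X i))"
    by (rule prod.cong) auto
  also have "w X = fact (count X x) * (\<Prod>i\<in>set_mset X - {x}. fact (count X i))"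
    unfolding w_def using True by (simp add: prod.remove)
  ultimately show ?thesis by (simp add: algebra_simps)
next
  case False
  have "w (add_mset x X) = fact 1 * (\<Prod>i\<in>set_mset X. fact (count (add_mset x X) i))"
    unfolding w_def using False by (simp add: not_in_iff)
  also have "(\<Prod>i\<in>set_mset X. fact (count (add_mset x X) i)) = w X"
    unfolding w_def by (rule prod.cong) (use False in auto)
  finally show ?thesis using False by (simp add: not_in_iff)
qed

lemma w_diff: "x \<in># X \<Longrightarrow> w X = count X x * w (X - {#x#})"
proof -
  assume h: "x \<in># X"
  have "w X = w (add_mset x (X - {#x#}))" using h by simp
  also have "\<dots> = Suc (count (X - {#x#}) x) * w (X - {#x#})" by (rule w_add)
  also have "Suc (count (X - {#x#}) x) = count X x" using h by (simp add: Suc_pred)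
  finally show ?thesis .
qed

lemma cmul: "x * y = z \<Longrightarrow> complex_of_real x * (complex_of_real y * d) = complex_of_real z * d"
proof -
  assume "x * y = z"
  moreover have "complex_of_real x * (complex_of_real y * d) = complex_of_real (x * y) * d"
    by (simp add: mult.assoc)
  ultimately show ?thesis by simp
qed

definition e :: "'a multiset \<Rightarrow> complex \<Rightarrow> 'a fock" where
  "e q c = (\<lambda>m. if m = q then c else 0)"

lemma C_eq: "foldr create xs fock_vacuum = e (mset xs) (complex_of_real (sqrt (real (w (mset xs)))))"
proof (induction xs)
  case Nil
  then show ?case by (simp add: fock_vacuum_def e_def)
next
  case (Cons x xs)
  show ?case
  proof
    fix m
    show "foldr create (x # xs) fock_vacuum m = e (mset (x # xs)) (complex_of_real (sqrt (real (w (mset (x # xs)))))) m"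
    proof (cases "m = add_mset x (mset xs)")
      case True
      have r: "sqrt (real (count m x)) * sqrt (real (w (mset xs))) = sqrt (real (w (mset (x#xs))))"
        using True by (simp add: w_add real_sqrt_mult[symmetric] algebra_simps)
      have "foldr create (x#xs) fock_vacuum m = create x (foldr create xs fock_vacuum) m" by simp
      also have "\<dots> = create x (e (mset xs) (complex_of_real (sqrt (real (w (mset xs)))))) m"
        by (simp only: Cons.IH)
      also have "\<dots> = complex_of_real (sqrt (real (count m x))) * complex_of_real (sqrt (real (w (mset xs))))"
        using True by (simp add: create_def e_def)
      also have "\<dots> = complex_of_real (sqrt (real (w (mset (x#xs)))))"
        using r by (metis of_real_mult)
      finally show ?thesis using True by (simp add: e_def)
    next
      case False
      have "foldr create (x#xs) fock_vacuum m = create x (foldr create xs fock_vacuum) m" by simp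
      also have "\<dots> = create x (e (mset xs) (complex_of_real (sqrt (real (w (mset xs)))))) m"
        by (simp only: Cons.IH)
      also have "\<dots> = 0"
        using False by (auto simp add: create_def e_def) (metis insert_DiffM)
      finally show ?thesis using False by (simp add: e_def)
    qed
  qed
qed

lemma create_zero[simp]: "create k (\<lambda>_. 0) = (\<lambda>_. 0)" by (rule ext) (simp add: create_def)
lemma annih_zero[simp]: "annih k (\<lambda>_. 0) = (\<lambda>_. 0)" by (simp add: annih_def)

lemma annih_e: "annih l (e q c) = (if l \<in># q then e (q - {#l#}) (complex_of_real (sqrt (real (count q l))) * c) else (\<lambda>_. 0))"
proof (cases "l \<in># q")
  case True
  show ?thesis
  proof
    fix m
    have "(add_mset l m = q) = (m = q - {#l#})" using True by auto
    moreover have "m = q - {#l#} \<Longrightarrow> count m l + 1 = count q l" using True by auto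
    ultimately show "annih l (e q c) m = (if l \<in># q then e (q - {#l#}) (complex_of_real (sqrt (real (count q l))) * c) else (\<lambda>_. 0)) m"
      using True by (auto simp add: annih_def e_def)
  qed
next
  case False
  then show ?thesis by (auto simp add: annih_def e_def fun_eq_iff)
qed

lemma create_e: "create k (e r d) = e (add_mset k r) (complex_of_real (sqrt (real (Suc (count r k)))) * d)"
proof
  fix m
  show "create k (e r d) m = e (add_mset k r) (complex_of_real (sqrt (real (Suc (count r k)))) * d) m"
    by (auto simp add: create_def e_def)
qed

lemma creates_zero: "foldr create ks (\<lambda>_. 0) = (\<lambda>_. 0)" by (induction ks) auto
lemma annihs_zero: "foldr annih ks (\<lambda>_. 0) = (\<lambda>_. 0)" by (induction ks) auto

lemma creates_e: "foldr create ks (e r d) = e (r + mset ks) (complex_of_real (sqrt (real (w (r + mset ks)) / real (w r))) * d)"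
proof (induction ks)
  case Nil
  then show ?case using w_pos[of r] by simp
next
  case (Cons k ks)
  have "sqrt (real (Suc (count (r + mset ks) k))) * sqrt (real (w (r + mset ks)) / real (w r))
     = sqrt (real (w (r + mset (k#ks))) / real (w r))"
    by (simp add: w_add real_sqrt_mult[symmetric] algebra_simps add_divide_distrib)
  hence h: "complex_of_real (sqrt (real (Suc (count (r + mset ks) k)))) * (complex_of_real (sqrt (real (w (r + mset ks)) / real (w r))) * d)
    = complex_of_real (sqrt (real (w (r + mset (k#ks))) / real (w r))) * d"
    by (rule cmul)
  have X: "add_mset k (r + mset ks) = r + mset (k#ks)" by simp
  have "foldr create (k#ks) (e r d) = create k (foldr create ks (e r d))" by simp
  also have "\<dots> = e (add_mset k (r + mset ks)) (complex_of_real (sqrt (real (Suc (count (r + mset ks) k)))) * (complex_of_real (sqrt (real (w (r + mset ks)) / real (w r))) * d))"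
    using Cons by (simp only: create_e)
  also have "\<dots> = e (r + mset (k#ks)) (complex_of_real (sqrt (real (w (r + mset (k#ks))) / real (w r))) * d)"
    by (simp only: h X)
  finally show ?case .
qed

lemma annihs_e: "foldr annih ls (e q c) = (if mset ls \<subseteq># q then e (q - mset ls) (complex_of_real (sqrt (real (w q) / real (w (q - mset ls)))) * c) else (\<lambda>_. 0))"
proof (induction ls)
  case Nil
  then show ?case using w_pos[of q] by simp
next
  case (Cons l ls)
  show ?case
  proof (cases "mset ls \<subseteq># q")
    case True
    note T = True
    show ?thesis
    proof (cases "l \<in># q - mset ls")
      case True
      have sub: "mset (l # ls) \<subseteq># q" using T True
        by (auto simp add: subseteq_mset_def in_diff_count)
      have eq: "q - mset ls - {#l#} = q - mset (l # ls)" by simp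
      have "w (q - mset ls) = count (q - mset ls) l * w (q - mset (l#ls))"
        using w_diff[OF True] eq by simp
      moreover have "count (q - mset ls) l > 0" using True by (simp add: in_diff_count)
      ultimately have "sqrt (real (count (q - mset ls) l)) * sqrt (real (w q) / real (w (q - mset ls)))
          = sqrt (real (w q) / real (w (q - mset (l#ls))))"
        by (simp add: real_sqrt_mult[symmetric] del: mset.simps)
      hence h: "complex_of_real (sqrt (real (count (q - mset ls) l))) * (complex_of_real (sqrt (real (w q) / real (w (q - mset ls)))) * c)
         = complex_of_real (sqrt (real (w q) / real (w (q - mset (l#ls))))) * c" by (rule cmul)
      have "foldr annih (l#ls) (e q c) = annih l (foldr annih ls (e q c))" by simp
      also have "\<dots> = e (q - mset ls - {#l#}) (complex_of_real (sqrt (real (count (q - mset ls) l))) * (complex_of_real (sqrt (real (w q) / real (w (q - mset ls)))) * c))"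
        using Cons T True by (simp only: annih_e if_True)
      also have "\<dots> = e (q - mset (l#ls)) (complex_of_real (sqrt (real (w q) / real (w (q - mset (l#ls))))) * c)"
        by (simp only: h eq)
      finally show ?thesis using sub by simp
    next
      case False
      have "\<not> mset (l # ls) \<subseteq># q" using False T
        by (auto simp add: subseteq_mset_def in_diff_count)
      then show ?thesis using Cons T False by (simp add: annih_e)
    qed
  next
    case False
    have "\<not> mset (l # ls) \<subseteq># q" using False
      by (auto dest: mset_subset_eq_insertD)
    then show ?thesis using Cons False by simp
  qed
qed


abbreviation FF :: "nat \<Rightarrow> (nat \<Rightarrow> 'a) \<Rightarrow> 'a multiset" where
  "FF L f \<equiv> image_mset f (mset_set {..<L})"

lemma FF_Suc: "FF (Suc L) f = add_mset (f L) (FF L f)"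
  by (simp add: lessThan_Suc)

lemma FF_perm: "t permutes {..<L} \<Longrightarrow> FF L (g \<circ> t) = FF L g"
proof -
  assume t: "t permutes {..<L}"
  have "FF L (g \<circ> t) = image_mset g (image_mset t (mset_set {..<L}))"
    by (simp add: multiset.map_comp)
  also have "image_mset t (mset_set {..<L}) = mset_set (t ` {..<L})"
    using t by (intro image_mset_mset_set) (auto dest: permutes_inj_on)
  also have "t ` {..<L} = {..<L}" using t by (rule permutes_image)
  finally show ?thesis .
qed

lemma count_FF: "count (FF L g) x = card {b\<in>{..<L}. g b = x}"
proof -
  have "count (FF L g) x = sum (count (mset_set {..<L})) (g -` {x} \<inter> set_mset (mset_set {..<L}))"
    by (rule count_image_mset)
  also have "\<dots> = sum (\<lambda>_. 1) {b\<in>{..<L}. g b = x}"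
    by (rule sum.cong) auto
  finally show ?thesis by simp
qed

lemma perm_step:
  assumes q: "q permutes {..<L}"
  shows "(\<Prod>k<Suc L. (if f k = g ((transpose L b \<circ> q) k) then 1 else 0 :: real))
        = (\<Prod>k<L. (if f k = (g \<circ> transpose L b) (q k) then 1 else 0 :: real)) * (if f L = g b then 1 else 0)"
proof -
  have "q L = L" using q by (auto intro: permutes_not_in)
  hence "(transpose L b \<circ> q) L = b" by simp
  then show ?thesis by (simp only: prod.lessThan_Suc o_apply)
qed

lemma perm_count:
  "(\<Sum>\<sigma>\<in>{\<sigma>. \<sigma> permutes {..<L}}. \<Prod>k<L. (if f k = g (\<sigma> k) then 1 else 0 :: real))
   = (if FF L f = FF L g then real (w (FF L f)) else 0)"
proof (induction L arbitrary: g)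
  case 0
  then show ?case by simp
next
  case (Suc L)
  define x where "x = f L"
  define G where "G = FF (Suc L) g"
  define Z where "Z = (if FF L f = G - {#x#} then real (w (FF L f)) else 0)"
  have "(\<Sum>\<sigma>\<in>{\<sigma>. \<sigma> permutes {..<Suc L}}. \<Prod>k<Suc L. (if f k = g (\<sigma> k) then 1 else 0 :: real))
     = (\<Sum>b\<in>insert L {..<L}. \<Sum>q\<in>{\<sigma>. \<sigma> permutes {..<L}}.
          \<Prod>k<Suc L. (if f k = g ((transpose L b \<circ> q) k) then 1 else 0 :: real))"
    unfolding lessThan_Suc by (rule sum_over_permutations_insert) auto
  also have "\<dots> = (\<Sum>b\<in>{..<Suc L}. 
        (\<Sum>q\<in>{\<sigma>. \<sigma> permutes {..<L}}. \<Prod>k<L. (if f k = (g \<circ> transpose L b) (q k) then 1 else 0 :: real)) * (if f L = g b then 1 else 0))"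
    unfolding lessThan_Suc[symmetric]
    unfolding sum_distrib_right
    by (rule sum.cong[OF refl], rule sum.cong[OF refl], rule perm_step, simp)
  also have "\<dots> = (\<Sum>b\<in>{..<Suc L}. Z * (if f L = g b then 1 else 0))"
  proof (intro sum.cong refl)
    fix b assume b: "b \<in> {..<Suc L}"
    have t: "transpose L b permutes {..<Suc L}" using b by (intro permutes_swap_id) auto
    have "G = FF (Suc L) (g \<circ> transpose L b)" unfolding G_def using FF_perm[OF t, of g] by simp
    also have "\<dots> = add_mset (g b) (FF L (g \<circ> transpose L b))" by (simp add: FF_Suc)
    finally have FG: "FF L (g \<circ> transpose L b) = G - {#g b#}" by simp
    show "(\<Sum>q\<in>{\<sigma>. \<sigma> permutes {..<L}}. \<Prod>k<L. (if f k = (g \<circ> transpose L b) (q k) then 1 else 0 :: real)) * (if f L = g b then 1 else 0)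
      = Z * (if f L = g b then 1 else 0)"
    proof (cases "f L = g b")
      case True
      have IH': "(\<Sum>q\<in>{\<sigma>. \<sigma> permutes {..<L}}. \<Prod>k<L. (if f k = (g \<circ> transpose L b) (q k) then 1 else 0 :: real))
         = (if FF L f = G - {#g b#} then real (w (FF L f)) else 0)"
        using Suc.IH[of "g \<circ> transpose L b"] unfolding FG .
      show ?thesis unfolding IH' Z_def x_def using True by simp
    qed simp
  qed
  also have "\<dots> = Z * real (card {b\<in>{..<Suc L}. g b = x})"
  proof -
    have "(\<Sum>b\<in>{..<Suc L}. Z * (if f L = g b then 1 else 0)) = Z * (\<Sum>b\<in>{..<Suc L}. (if g b = x then 1 else 0))"
      unfolding sum_distrib_left[symmetric] x_def by (rule arg_cong[where f="(*) Z"], rule sum.cong) auto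
    also have "(\<Sum>b\<in>{..<Suc L}. (if g b = x then 1 else 0 :: real)) = real (card {b\<in>{..<Suc L}. g b = x})"
      by (simp add: sum.If_cases Int_def del: sum.lessThan_Suc)
    finally show ?thesis .
  qed
  also have "\<dots> = real (count G x) * Z"
    unfolding G_def count_FF by simp
  also have "\<dots> = (if FF (Suc L) f = G then real (w (FF (Suc L) f)) else 0)"
  proof (cases "FF (Suc L) f = G")
    case True
    then have "G = add_mset x (FF L f)" by (simp add: FF_Suc x_def)
    then show ?thesis using True by (simp add: w_add Z_def algebra_simps)
  next
    case False
    have "\<not> (x \<in># G \<and> FF L f = G - {#x#})"
    proof
      assume "x \<in># G \<and> FF L f = G - {#x#}"
      hence "FF (Suc L) f = G" by (simp add: FF_Suc x_def insert_DiffM)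
      with False show False by simp
    qed
    then show ?thesis using False by (auto simp: not_in_iff Z_def)
  qed
  finally show ?case unfolding G_def .
qed


lemma nths_restrict: "nths xs A = nths xs (A \<inter> {..<length xs})"
proof (induction xs arbitrary: A)
  case Nil
  then show ?case by simp
next
  case (Cons a xs)
  have "{j. Suc j \<in> A \<inter> {..<length (a#xs)}} = {j. Suc j \<in> A} \<inter> {..<length xs}" by auto
  then show ?case using Cons[of "{j. Suc j \<in> A}"] by (simp add: nths_Cons)
qed

lemma nths_snoc: "nths (xs @ [x]) A = nths xs A @ (if length xs \<in> A then [x] else [])"
  by (simp add: nths_append)

lemma mset_nths_compl: "mset (nths xs A) + mset (nths xs (- A)) = mset xs"
proof (induction xs rule: rev_induct)
  case Nil
  then show ?case by simp
next
  case (snoc x xs)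
  then show ?case by (auto simp add: nths_snoc)
qed

lemma mset_nths_diff:
  "mset (nths xs ({..<length xs} - A)) = mset xs - mset (nths xs A)"
proof -
  have "nths xs ({..<length xs} - A) = nths xs (- A)"
    by (subst (1 2) nths_restrict) (rule arg_cong[where f="nths xs"], auto)
  then show ?thesis using mset_nths_compl[of xs A]
    by (metis add_diff_cancel_left')
qed

lemma length_nths_sub: "A \<subseteq> {..<length xs} \<Longrightarrow> length (nths xs A) = card A"
  by (simp add: length_nths) (metis (no_types, lifting) Collect_cong lessThan_iff subset_eq Collect_mem_eq)

definition cc :: "'a list \<Rightarrow> 'a multiset \<Rightarrow> nat" where
  "cc xs K = card {A. A \<subseteq> {..<length xs} \<and> mset (nths xs A) = K}"

lemma cc_snoc: "cc (xs @ [x]) K = cc xs K + (if x \<in># K then cc xs (K - {#x#}) else 0)"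
proof -
  define n where "n = length xs"
  define S0 where "S0 = {A. A \<subseteq> {..<n} \<and> mset (nths xs A) = K}"
  define S1 where "S1 = {A. A \<subseteq> {..<n} \<and> add_mset x (mset (nths xs A)) = K}"
  have ins: "A \<subseteq> {..<n} \<Longrightarrow> nths xs (insert n A) = nths xs A" for A
    by (subst (1 2) nths_restrict) (rule arg_cong[where f="nths xs"], auto simp: n_def)
  have eq: "{A. A \<subseteq> {..<length (xs @ [x])} \<and> mset (nths (xs @ [x]) A) = K} = S0 \<union> insert n ` S1"
  proof (intro equalityI subsetI)
    fix A assume "A \<in> {A. A \<subseteq> {..<length (xs @ [x])} \<and> mset (nths (xs @ [x]) A) = K}"
    hence A: "A \<subseteq> {..<Suc n}" "mset (nths (xs @ [x]) A) = K" by (auto simp: n_def)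
    show "A \<in> S0 \<union> insert n ` S1"
    proof (cases "n \<in> A")
      case True
      have sub: "A - {n} \<subseteq> {..<n}" using A by auto
      have "nths xs A = nths xs (A - {n})" using ins[OF sub] True by (simp add: insert_absorb)
      hence "A - {n} \<in> S1" using A True sub by (simp add: S1_def nths_snoc n_def[symmetric])
      moreover have "A = insert n (A - {n})" using True by auto
      ultimately show ?thesis by blast
    next
      case False
      have "A \<subseteq> {..<n}" using A(1) False by (auto simp: subset_eq less_Suc_eq)
      hence "A \<in> S0" using A False by (auto simp: S0_def nths_snoc n_def[symmetric])
      then show ?thesis by blast
    qed
  next
    fix A assume "A \<in> S0 \<union> insert n ` S1"
    then show "A \<in> {A. A \<subseteq> {..<length (xs @ [x])} \<and> mset (nths (xs @ [x]) A) = K}"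
    proof
      assume "A \<in> S0" then show ?thesis by (auto simp: S0_def nths_snoc n_def[symmetric])
    next
      assume "A \<in> insert n ` S1"
      then obtain B where B: "B \<in> S1" "A = insert n B" by blast
      then show ?thesis using ins[of B] by (auto simp: S1_def nths_snoc n_def[symmetric])
    qed
  qed
  have fin0: "finite S0" unfolding S0_def by (rule finite_subset[of _ "Pow {..<n}"]) auto
  have fin1: "finite S1" unfolding S1_def by (rule finite_subset[of _ "Pow {..<n}"]) auto
  have disj: "S0 \<inter> insert n ` S1 = {}" by (auto simp: S0_def)
  have inj: "inj_on (insert n) S1"
  proof (rule inj_onI)
    fix a b assume ab: "a \<in> S1" "b \<in> S1" "insert n a = insert n b"
    hence "n \<notin> a" "n \<notin> b" by (auto simp: S1_def)
    then show "a = b" by (metis Diff_insert_absorb ab(3))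
  qed
  have "cc (xs @ [x]) K = card S0 + card S1"
    unfolding cc_def eq using fin0 fin1 disj inj by (simp add: card_Un_disjoint card_image)
  moreover have "card S0 = cc xs K" by (simp add: cc_def S0_def n_def)
  moreover have "card S1 = (if x \<in># K then cc xs (K - {#x#}) else 0)"
  proof (cases "x \<in># K")
    case True
    have "S1 = {A. A \<subseteq> {..<n} \<and> mset (nths xs A) = K - {#x#}}"
      unfolding S1_def using True by (auto simp: insert_DiffM)
    then show ?thesis using True by (simp add: cc_def n_def)
  next
    case False
    then have "S1 = {}" unfolding S1_def by auto
    then show ?thesis using False by simp
  qed
  ultimately show ?thesis by simp
qed

lemma cc_Nil: "cc [] K = (if K = {#} then 1 else 0)"
proof -
  have "{A. A \<subseteq> {..<length ([]::'a list)} \<and> mset (nths [] A) = K} = (if K = {#} then {{}} else {})"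
    by auto
  then show ?thesis by (simp add: cc_def)
qed

lemma cc_w: "cc xs K * w K * w (mset xs - K) = (if K \<subseteq># mset xs then w (mset xs) else 0)"
proof (induction xs arbitrary: K rule: rev_induct)
  case Nil
  then show ?case by (simp add: cc_Nil)
next
  case (snoc x xs)
  define n0 where "n0 = mset xs"
  have nn: "mset (xs @ [x]) = add_mset x n0" by (simp add: n0_def)
  have IH: "\<And>K. cc xs K * w K * w (n0 - K) = (if K \<subseteq># n0 then w n0 else 0)"
    using snoc by (simp add: n0_def)
  have wp: "\<And>X. w X > 0" by (rule w_pos)
  have F1: "K \<subseteq># n0 \<Longrightarrow> add_mset x n0 - K = add_mset x (n0 - K)"
  proof -
    assume h: "K \<subseteq># n0"
    show ?thesis
    proof (rule multiset_eqI)
      fix a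
      have "count K a \<le> count n0 a" using h by (simp add: subseteq_mset_def)
      then show "count (add_mset x n0 - K) a = count (add_mset x (n0 - K)) a"
        by (simp add: Suc_diff_le)
    qed
  qed
  have F2: "x \<in># K \<Longrightarrow> add_mset x n0 - K = n0 - (K - {#x#})"
  proof -
    assume "x \<in># K"
    hence "count K x > 0" by simp
    thus ?thesis by (intro multiset_eqI) auto
  qed
  have F3: "x \<in># K \<Longrightarrow> (K - {#x#} \<subseteq># n0) = (K \<subseteq># add_mset x n0)"
  proof -
    have "\<forall>a. (count (K - {#x#}) a \<le> count n0 a) = (count K a \<le> count (add_mset x n0) a)"
      by auto
    then show ?thesis unfolding subseteq_mset_def by blast
  qed
  have F4: "K \<subseteq># n0 \<Longrightarrow> K \<subseteq># add_mset x n0"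
    by (metis add_mset_add_single mset_subset_eq_add_left subset_mset.order_trans)
  have F5: "\<not> K \<subseteq># n0 \<Longrightarrow> K \<subseteq># add_mset x n0 \<Longrightarrow> count K x = Suc (count n0 x)"
  proof -
    assume ns: "\<not> K \<subseteq># n0" and s: "K \<subseteq># add_mset x n0"
    obtain a where a: "count K a > count n0 a" using ns by (auto simp: subseteq_mset_def not_le)
    have "count K a \<le> count (add_mset x n0) a" using mset_subset_eq_count[OF s] by blast
    moreover have "count K x \<le> count (add_mset x n0) x" using mset_subset_eq_count[OF s] by blast
    ultimately show ?thesis using a by (cases "a = x") auto
  qed
  have F6: "K \<subseteq># n0 \<Longrightarrow> count (n0 - K) x = count n0 x - count K x" by simp
  have F7: "K \<subseteq># n0 \<Longrightarrow> count K x \<le> count n0 x" by (simp add: subseteq_mset_def)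
  have c0: "\<not> K \<subseteq># n0 \<Longrightarrow> cc xs K = 0" using IH[of K] wp[of K] wp[of "n0 - K"] by (auto split: if_splits)
  define T1 where "T1 = cc xs K * w K * w (add_mset x n0 - K)"
  define T2 where "T2 = (if x \<in># K then cc xs (K - {#x#}) else 0) * w K * w (add_mset x n0 - K)"
  have lhs: "cc (xs @ [x]) K * w K * w (mset (xs @ [x]) - K) = T1 + T2"
    unfolding T1_def T2_def nn by (simp add: cc_snoc algebra_simps)
  have T1: "T1 = (if K \<subseteq># n0 then (Suc (count n0 x) - count K x) * w n0 else 0)"
  proof (cases "K \<subseteq># n0")
    case True
    have "T1 = Suc (count (n0 - K) x) * (cc xs K * w K * w (n0 - K))"
      unfolding T1_def F1[OF True] w_add by (simp only: ac_simps)
    also have "\<dots> = Suc (count n0 x - count K x) * w n0"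
      using IH[of K] True by simp
    also have "Suc (count n0 x - count K x) = Suc (count n0 x) - count K x"
      using F7[OF True] by (rule Suc_diff_le[symmetric])
    finally show ?thesis using True by simp
  qed (simp add: T1_def c0)
  have T2: "T2 = (if K \<subseteq># add_mset x n0 then count K x * w n0 else 0)"
  proof (cases "x \<in># K")
    case True
    have "w K = count K x * w (K - {#x#})" using True by (rule w_diff)
    hence "T2 = count K x * (cc xs (K - {#x#}) * w (K - {#x#}) * w (n0 - (K - {#x#})))"
      unfolding T2_def F2[OF True] using True by simp
    also have "\<dots> = (if K \<subseteq># add_mset x n0 then count K x * w n0 else 0)"
      using IH[of "K - {#x#}"] F3[OF True] by simp
    finally show ?thesis .
  next
    case False
    then show ?thesis by (simp add: T2_def not_in_iff[symmetric])
  qed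
  show ?case
  proof (cases "K \<subseteq># n0")
    case True
    have "Suc (count n0 x) - count K x + count K x = Suc (count n0 x)" using F7[OF True] by simp
    hence "(Suc (count n0 x) - count K x) * w n0 + count K x * w n0 = Suc (count n0 x) * w n0"
      by (metis add_mult_distrib)
    then show ?thesis using F4[OF True] True
      by (simp only: lhs[unfolded nn] T1 T2 nn w_add if_True)
  next
    case False
    show ?thesis
    proof (cases "K \<subseteq># add_mset x n0")
      case True
      then show ?thesis using F5[OF False True] False by (simp only: lhs[unfolded nn] T1 T2 nn w_add if_True if_False)
    next
      case nt: False
      then show ?thesis using False by (simp only: lhs[unfolded nn] T1 T2 nn if_False)
    qed
  qed
qed


lemma FF_nth: "FF (length xs) (nth xs) = mset xs"
proof -
  have "mset xs = mset (map (nth xs) [0..<length xs])" by (simp add: map_nth)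
  also have "\<dots> = image_mset (nth xs) (mset_set {0..<length xs})" by simp
  finally show ?thesis by (simp add: atLeast0LessThan)
qed

lemma pdelta_eq: "length ys = length xs \<Longrightarrow>
  pdelta xs ys = complex_of_real (if mset xs = mset ys then real (w (mset xs)) / fact (length xs) else 0)"
proof -
  assume h: "length ys = length xs"
  have y: "FF (length xs) (nth ys) = mset ys" using FF_nth[of ys] h by simp
  show ?thesis
    unfolding pdelta_def using perm_count[where L="length xs" and f="nth xs" and g="nth ys"]
    by (simp add: FF_nth y)
qed

lemma sym_e: "sym_state xs = e (mset xs) (complex_of_real (sqrt (real (w (mset xs))) / sqrt (fact (length xs))))"
  unfolding sym_state_def C_eq by (rule ext) (simp add: e_def)

lemma inner_e: "c \<noteq> 0 \<Longrightarrow> fock_inner (e q c) v = cnj c * v q"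
proof -
  assume c: "c \<noteq> 0"
  have "{m. e q c m \<noteq> 0} = {q}" using c by (auto simp: e_def)
  then show ?thesis by (simp add: fock_inner_def e_def)
qed

lemma sqrt_id: "a > 0 \<Longrightarrow> b > 0 \<Longrightarrow> c > 0 \<Longrightarrow> f > 0 \<Longrightarrow>
  sqrt a / sqrt f * (sqrt (a / c) * (sqrt (b / c) * (sqrt b / sqrt f))) = a * b / (c * f)"
  by (simp add: real_sqrt_divide field_simps)

lemma sum_ind: "finite S \<Longrightarrow> (\<Sum>A\<in>S. (if P A then 1 else 0 :: real)) = real (card {A\<in>S. P A})"
  by (simp add: sum.If_cases Int_def conj_commute)


lemma LHS_val:
  fixes iss jss ks ls :: "'a list" and N :: nat
  assumes "length iss = N" and "length jss = N"
  shows "fock_inner (sym_state iss) (foldr create ks (foldr annih ls (sym_state jss)))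
    = complex_of_real (if mset ls \<subseteq># mset jss \<and> mset iss = (mset jss - mset ls) + mset ks
        then real (w (mset iss)) * real (w (mset jss)) / (real (w (mset jss - mset ls)) * fact N) else 0)"
proof -
  define n where "n = mset iss"
  define n' where "n' = mset jss"
  define K where "K = mset ks"
  define L where "L = mset ls"
  define p where "p = n' - L"
  define si where "si = sqrt (real (w n)) / sqrt (fact N)"
  define sj where "sj = sqrt (real (w n')) / sqrt (fact N)"
  have si0: "complex_of_real si \<noteq> 0" unfolding si_def using w_pos[of n] by simp
  have "fock_inner (sym_state iss) (foldr create ks (foldr annih ls (sym_state jss)))
      = cnj (complex_of_real si) * foldr create ks (foldr annih ls (e n' (complex_of_real sj))) n"
    unfolding sym_e assms n_def[symmetric] n'_def[symmetric] si_def[symmetric] sj_def[symmetric]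
    using si0 by (rule inner_e)
  also have "\<dots> = complex_of_real (if L \<subseteq># n' \<and> n = p + K
        then real (w n) * real (w n') / (real (w p) * fact N) else 0)"
  proof (cases "L \<subseteq># n'")
    case True
    have "foldr create ks (foldr annih ls (e n' (complex_of_real sj)))
      = e (p + K) (complex_of_real (sqrt (real (w (p + K)) / real (w p))) *
           (complex_of_real (sqrt (real (w n') / real (w p))) * complex_of_real sj))"
      using True by (simp add: annihs_e creates_e p_def L_def K_def)
    moreover have "n = p + K \<Longrightarrow>
       si * (sqrt (real (w (p + K)) / real (w p)) * (sqrt (real (w n') / real (w p)) * sj))
       = real (w n) * real (w n') / (real (w p) * fact N)"
    proof -
      assume h: "n = p + K"
      hence h': "w (p + K) = w n" by simp
      show ?thesis unfolding si_def sj_def h'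
        by (rule sqrt_id) (use w_pos in auto)
    qed
    ultimately show ?thesis
    proof (cases "n = p + K")
      case c: True
      assume F: "foldr create ks (foldr annih ls (e n' (complex_of_real sj)))
      = e (p + K) (complex_of_real (sqrt (real (w (p + K)) / real (w p))) *
           (complex_of_real (sqrt (real (w n') / real (w p))) * complex_of_real sj))"
        and R: "n = p + K \<Longrightarrow>
       si * (sqrt (real (w (p + K)) / real (w p)) * (sqrt (real (w n') / real (w p)) * sj))
       = real (w n) * real (w n') / (real (w p) * fact N)"
      have "cnj (complex_of_real si) * foldr create ks (foldr annih ls (e n' (complex_of_real sj))) n
        = complex_of_real (si * (sqrt (real (w (p + K)) / real (w p)) * (sqrt (real (w n') / real (w p)) * sj)))"
        unfolding F using c by (simp add: e_def)
      also have "\<dots> = complex_of_real (real (w n) * real (w n') / (real (w p) * fact N))"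
        using R[OF c] by simp
      finally show ?thesis using c True by simp
    next
      case c: False
      assume F: "foldr create ks (foldr annih ls (e n' (complex_of_real sj)))
      = e (p + K) (complex_of_real (sqrt (real (w (p + K)) / real (w p))) *
           (complex_of_real (sqrt (real (w n') / real (w p))) * complex_of_real sj))"
      show ?thesis unfolding F using c by (simp add: e_def)
    qed
  next
    case False
    then show ?thesis by (simp add: annihs_e creates_zero L_def)
  qed
  finally show ?thesis by (simp add: n_def n'_def K_def L_def p_def)
qed


lemma RHS_val:
  fixes iss jss ks ls :: "'a list" and M N :: nat
  assumes MN: "M \<le> N"
    and li: "length iss = N" and lj: "length jss = N" and lk: "length ks = M" and ll: "length ls = M"
  shows "complex_of_real (fact (N - M) / fact N * (fact M)^2) *
      (\<Sum>A\<in>{A. A \<subseteq> {..<N} \<and> card A = M}. \<Sum>B\<in>{B. B \<subseteq> {..<N} \<and> card B = M}.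
         pdelta ks (nths iss A) * pdelta ls (nths jss B) *
         pdelta (nths iss ({..<N} - A)) (nths jss ({..<N} - B)))
    = complex_of_real (if mset ls \<subseteq># mset jss \<and> mset iss = (mset jss - mset ls) + mset ks
        then real (w (mset iss)) * real (w (mset jss)) / (real (w (mset jss - mset ls)) * fact N) else 0)"
proof -
  define n where "n = mset iss"
  define n' where "n' = mset jss"
  define K where "K = mset ks"
  define L where "L = mset ls"
  define SA where "SA = {A. A \<subseteq> {..<N} \<and> card A = M}"
  define Q where "Q = real (w K) / fact M * (real (w L) / fact M) *
     (if n - K = n' - L then real (w (n - K)) / fact (N - M) else 0)"
  have finSA: "finite SA" unfolding SA_def by (rule finite_subset[of _ "Pow {..<N}"]) auto
  have trm: "pdelta ks (nths iss A) * pdelta ls (nths jss B) *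
         pdelta (nths iss ({..<N} - A)) (nths jss ({..<N} - B))
     = complex_of_real ((if mset (nths iss A) = K then 1 else 0) * (if mset (nths jss B) = L then 1 else 0) * Q)"
    if A: "A \<in> SA" and B: "B \<in> SA" for A B
  proof -
    have As: "A \<subseteq> {..<N}" "card A = M" and Bs: "B \<subseteq> {..<N}" "card B = M"
      using A B by (auto simp: SA_def)
    have l1: "length (nths iss A) = length ks" using As li lk by (simp add: length_nths_sub)
    have l2: "length (nths jss B) = length ls" using Bs lj ll by (simp add: length_nths_sub)
    have "finite A" "finite B" using As Bs finite_subset by blast+
    hence cA: "card ({..<N} - A) = N - M" and cB: "card ({..<N} - B) = N - M"
      using As Bs by (simp_all add: card_Diff_subset)
    have l3: "length (nths jss ({..<N} - B)) = length (nths iss ({..<N} - A))"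
      using cA cB li lj by (simp add: length_nths_sub)
    have l4: "length (nths iss ({..<N} - A)) = N - M"
      using cA li by (simp add: length_nths_sub)
    have m1: "mset (nths iss ({..<N} - A)) = n - mset (nths iss A)"
      using mset_nths_diff[of iss A] li by (simp add: n_def)
    have m2: "mset (nths jss ({..<N} - B)) = n' - mset (nths jss B)"
      using mset_nths_diff[of jss B] lj by (simp add: n'_def)
    show ?thesis
      unfolding pdelta_eq[OF l1] pdelta_eq[OF l2] pdelta_eq[OF l3] m1 m2 l4
      by (simp add: Q_def K_def L_def lk ll eq_commute[of "mset ks"] eq_commute[of "mset ls"])
  qed
  have ind: "(\<Sum>A\<in>SA. (if mset (nths xs A) = X then 1 else 0 :: real)) = real (cc xs X)"
    if "length xs = N" "size X = M" for xs :: "'a list" and X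
  proof -
    have "{A\<in>SA. mset (nths xs A) = X} = {A. A \<subseteq> {..<length xs} \<and> mset (nths xs A) = X}"
    proof (intro equalityI subsetI)
      fix A assume "A \<in> {A. A \<subseteq> {..<length xs} \<and> mset (nths xs A) = X}"
      hence A: "A \<subseteq> {..<N}" "mset (nths xs A) = X" using that by auto
      have "card A = length (nths xs A)" using A that by (simp add: length_nths_sub)
      also have "\<dots> = size X" using A(2) by (metis size_mset)
      finally show "A \<in> {A\<in>SA. mset (nths xs A) = X}" using A that by (simp add: SA_def)
    qed (auto simp: SA_def that)
    then show ?thesis using sum_ind[OF finSA, of "\<lambda>A. mset (nths xs A) = X"] by (simp add: cc_def)
  qed
  have "(\<Sum>A\<in>SA. \<Sum>B\<in>SA.
         pdelta ks (nths iss A) * pdelta ls (nths jss B) *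
         pdelta (nths iss ({..<N} - A)) (nths jss ({..<N} - B)))
     = (\<Sum>A\<in>SA. \<Sum>B\<in>SA. complex_of_real ((if mset (nths iss A) = K then 1 else 0) * (if mset (nths jss B) = L then 1 else 0) * Q))"
    by (intro sum.cong refl) (rule trm)
  also have "\<dots> = complex_of_real ((\<Sum>A\<in>SA. (if mset (nths iss A) = K then 1 else 0)) * (\<Sum>B\<in>SA. (if mset (nths jss B) = L then 1 else 0)) * Q)"
  proof -
    have "(\<Sum>A\<in>SA. (if mset (nths iss A) = K then 1 else 0)) * (\<Sum>B\<in>SA. (if mset (nths jss B) = L then 1 else 0)) * Q
      = (\<Sum>A\<in>SA. \<Sum>B\<in>SA. (if mset (nths iss A) = K then 1 else 0) * (if mset (nths jss B) = L then 1 else (0::real))) * Q"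
      by (simp only: sum_product)
    also have "\<dots> = (\<Sum>A\<in>SA. \<Sum>B\<in>SA. (if mset (nths iss A) = K then 1 else 0) * (if mset (nths jss B) = L then 1 else (0::real)) * Q)"
      by (simp only: sum_distrib_right)
    finally show ?thesis by (simp only: of_real_sum)
  qed
  also have "\<dots> = complex_of_real (real (cc iss K) * real (cc jss L) * Q)"
    using ind[of iss K] ind[of jss L] li lj lk ll by (simp add: K_def L_def)
  finally have S: "(\<Sum>A\<in>SA. \<Sum>B\<in>SA.
         pdelta ks (nths iss A) * pdelta ls (nths jss B) *
         pdelta (nths iss ({..<N} - A)) (nths jss ({..<N} - B)))
     = complex_of_real (real (cc iss K) * real (cc jss L) * Q)" .
  have EK: "real (cc iss K) * real (w K) * real (w (n - K)) = (if K \<subseteq># n then real (w n) else 0)"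
    using arg_cong[OF cc_w[of iss K], of real] by (simp add: n_def)
  have EL: "real (cc jss L) * real (w L) * real (w (n' - L)) = (if L \<subseteq># n' then real (w n') else 0)"
    using arg_cong[OF cc_w[of jss L], of real] by (simp add: n'_def)
  have fM: "fact M > (0::real)" "fact N > (0::real)" "fact (N - M) > (0::real)" by auto
  have main: "fact (N - M) / fact N * (fact M)^2 * (real (cc iss K) * real (cc jss L) * Q)
     = (if L \<subseteq># n' \<and> n = (n' - L) + K then real (w n) * real (w n') / (real (w (n' - L)) * fact N) else 0)"
  proof (cases "n - K = n' - L")
    case True
    define p where "p = n' - L"
    have p0: "real (w p) > 0" using w_pos[of p] by simp
    have "fact (N - M) / fact N * (fact M)^2 * (real (cc iss K) * real (cc jss L) * Q)
       = (real (cc iss K) * real (w K) * real (w (n - K))) * (real (cc jss L) * real (w L) * real (w (n' - L))) / (real (w p) * fact N)"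
      using True fM p0 unfolding Q_def p_def by (simp add: field_simps power2_eq_square)
    also have "\<dots> = (if K \<subseteq># n \<and> L \<subseteq># n' then real (w n) * real (w n') / (real (w p) * fact N) else 0)"
      unfolding EK EL by simp
    also have "(K \<subseteq># n \<and> L \<subseteq># n') = (L \<subseteq># n' \<and> n = (n' - L) + K)"
    proof
      assume h: "K \<subseteq># n \<and> L \<subseteq># n'"
      hence "n = (n - K) + K" by (simp add: subset_mset.diff_add)
      thus "L \<subseteq># n' \<and> n = (n' - L) + K" using h True by simp
    next
      assume h: "L \<subseteq># n' \<and> n = (n' - L) + K"
      thus "K \<subseteq># n \<and> L \<subseteq># n'" by (metis mset_subset_eq_add_right)
    qed
    finally show ?thesis by (simp add: p_def)
  next
    case False
    have "\<not> (L \<subseteq># n' \<and> n = (n' - L) + K)"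
    proof
      assume "L \<subseteq># n' \<and> n = (n' - L) + K"
      hence "n - K = n' - L" by simp
      with False show False by simp
    qed
    moreover have "Q = 0" using False by (simp add: Q_def)
    ultimately show ?thesis by (simp only: if_not_P if_False mult_zero_right)
  qed
  show ?thesis
    unfolding SA_def[symmetric] S
    using arg_cong[OF main, of complex_of_real]
    by (simp only: of_real_mult n_def n'_def K_def L_def)
qed

theorem lemma2:
  fixes iss jss ks ls :: "'a list" and M N :: nat
  assumes "1 \<le> M" and "M \<le> N"
    and "length iss = N" and "length jss = N" and "length ks = M" and "length ls = M"
  shows "fock_inner (sym_state iss) (foldr create ks (foldr annih ls (sym_state jss)))
    = complex_of_real (fact (N - M) / fact N * (fact M)^2) *
      (\<Sum>A\<in>{A. A \<subseteq> {..<N} \<and> card A = M}. \<Sum>B\<in>{B. B \<subseteq> {..<N} \<and> card B = M}.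
         pdelta ks (nths iss A) * pdelta ls (nths jss B) *
         pdelta (nths iss ({..<N} - A)) (nths jss ({..<N} - B)))"
  unfolding LHS_val[OF assms(3,4)] RHS_val[OF assms(2-6)] ..

end
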